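(* Let $c>1$ be an integer, let $m=m_1m_2\cdots m_c\in S_c$, and let $K$ be the set partition of $S_c$ whose only part with more than one element is the set of cyclic shifts of $m$, namely $\{m_am_{a+1}\cdots m_cm_1\cdots m_{a-1} : 1\le a\le c\}$ (all other parts are singletons). Let $n>c$. Define $p\in S_n$ by $$p=1\,(m_1+1)\,(m_2+1)\cdots(m_c+1)\,(c+2)\,(c+3)\cdots n,$$ and let $q\in S_n$ be the permutation obtained from $p$ by swapping the positions of the letters $1$ and $2$. Then every non-avoider in $S_n$ is $K$-equivalent to $p$ or to $q$.
   Context: Permutations are written in one-line notation as words. The order permutation (standardization) of a word $u$ of distinct positive integers of length $\ell$ is the unique $\pi\in S_\ell$ with $\pi_i<\pi_j$ iff $u_i<u_j$. The $K$-equivalence on $S_n$ is the equivalence relation generated by declaring $\phi\equiv\psi$ whenever $\phi=aub$ and $\psi=avb$ for words $a,b,u,v$ with $u,v$ of length $c$ whose order permutations lie in the same part of $K$. A hit in a permutation is a contiguous subword of length $c$ whose order permutation is a cyclic shift of $m$; a non-avoider is a permutation containing at least one hit. *)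

theory Defs
  imports Main
begin

definition perms :: "nat \<Rightarrow> nat list set" where
  "perms n = {w. distinct w \<and> set w = {1..n}}"

definition std :: "nat list \<Rightarrow> nat list" where
  "std u = map (\<lambda>x. card {y \<in> set u. y \<le> x}) u"

definition cyc_shifts :: "nat list \<Rightarrow> nat list set" where
  "cyc_shifts m = {rotate a m | a. a < length m}"

definition K_same_part :: "nat list \<Rightarrow> nat list \<Rightarrow> nat list \<Rightarrow> bool" where
  "K_same_part m s t \<longleftrightarrow> s = t \<or> (s \<in> cyc_shifts m \<and> t \<in> cyc_shifts m)"

definition K_step :: "nat list \<Rightarrow> nat \<Rightarrow> nat list \<Rightarrow> nat list \<Rightarrow> bool" where
  "K_step m n \<phi> \<psi> \<longleftrightarrow> \<phi> \<in> perms n \<and> \<psi> \<in> perms n \<and>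
     (\<exists>a b u v. \<phi> = a @ u @ b \<and> \<psi> = a @ v @ b \<and>
        length u = length m \<and> length v = length m \<and> K_same_part m (std u) (std v))"

definition K_equiv :: "nat list \<Rightarrow> nat \<Rightarrow> nat list \<Rightarrow> nat list \<Rightarrow> bool" where
  "K_equiv m n \<phi> \<psi> \<longleftrightarrow> \<phi> \<in> perms n \<and> \<psi> \<in> perms n \<and>
     (\<lambda>x y. K_step m n x y \<or> K_step m n y x)\<^sup>*\<^sup>* \<phi> \<psi>"

definition non_avoider :: "nat list \<Rightarrow> nat list \<Rightarrow> bool" where
  "non_avoider m \<phi> \<longleftrightarrow> (\<exists>a u b. \<phi> = a @ u @ b \<and> length u = length m \<and> std u \<in> cyc_shifts m)"

definition p_perm :: "nat list \<Rightarrow> nat \<Rightarrow> nat list" where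
  "p_perm m n = 1 # map (\<lambda>x. x + 1) m @ [length m + 2 ..< n + 1]"

definition swap12 :: "nat \<Rightarrow> nat" where
  "swap12 x = (if x = 1 then 2 else if x = 2 then 1 else x)"

definition q_perm :: "nat list \<Rightarrow> nat \<Rightarrow> nat list" where
  "q_perm m n = map swap12 (p_perm m n)"

end

theory Submission
  imports Defs
begin


definition rk :: "nat set \<Rightarrow> nat \<Rightarrow> nat" where
  "rk A x = card {y \<in> A. y < x}"

lemma length_std[simp]: "length (std u) = length u"
  by (simp add: std_def)

lemma std_rotate: "std (rotate k u) = rotate k (std u)"
  by (simp add: std_def rotate_map)

lemma card_le_inj:
  fixes A :: "nat set"
  assumes "finite A" "a \<in> A" "b \<in> A" "card {y \<in> A. y \<le> a} = card {y \<in> A. y \<le> b}"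
  shows "a = b"
proof (rule ccontr)
  assume "a \<noteq> b"
  then consider "a < b" | "b < a" by linarith
  then show False
  proof cases
    case 1
    have "b \<in> {y \<in> A. y \<le> b}" "b \<notin> {y \<in> A. y \<le> a}" using 1 assms(3) by auto
    then have "{y \<in> A. y \<le> a} \<subset> {y \<in> A. y \<le> b}" using 1 by fastforce
    then have "card {y \<in> A. y \<le> a} < card {y \<in> A. y \<le> b}"
      using assms(1) by (intro psubset_card_mono) auto
    then show False using assms(4) by simp
  next
    case 2
    have "a \<in> {y \<in> A. y \<le> a}" "a \<notin> {y \<in> A. y \<le> b}" using 2 assms(2) by auto
    then have "{y \<in> A. y \<le> b} \<subset> {y \<in> A. y \<le> a}" using 2 by fastforce
    then have "card {y \<in> A. y \<le> b} < card {y \<in> A. y \<le> a}"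
      using assms(1) by (intro psubset_card_mono) auto
    then show False using assms(4) by simp
  qed
qed



lemma std_inj:
  assumes "set u = set v" "std u = std v"
  shows "u = v"
proof (rule nth_equalityI)
  show l: "length u = length v" using assms(2) by (metis length_std)
  fix i assume i: "i < length u"
  have "std u ! i = std v ! i" using assms by simp
  then have "card {y \<in> set u. y \<le> u ! i} = card {y \<in> set u. y \<le> v ! i}"
    using i l assms(1) by (simp add: std_def)
  then show "u ! i = v ! i"
    using card_le_inj[of "set u" "u!i" "v!i"] i l assms(1) by (metis finite_set nth_mem)
qed



lemma std_replace_head:
  assumes "x \<notin> set z" "y \<notin> set z" "\<forall>w\<in>set z. (w < x \<longleftrightarrow> w < y)"
  shows "std (x # z) = std (y # z)"
proof -
  have h1: "{w \<in> insert x (set z). w \<le> x} = insert x {w \<in> set z. w < x}"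
    using assms(1) by auto
  have h2: "{w \<in> insert y (set z). w \<le> y} = insert y {w \<in> set z. w < y}"
    using assms(2) by auto
  have h3: "{w \<in> set z. w < x} = {w \<in> set z. w < y}" using assms(3) by auto
  have hd: "card {w \<in> insert x (set z). w \<le> x} = card {w \<in> insert y (set z). w \<le> y}"
    unfolding h1 h2 h3 using assms by simp
  have tl: "card {w \<in> insert x (set z). w \<le> z0} = card {w \<in> insert y (set z). w \<le> z0}"
    if z0: "z0 \<in> set z" for z0
  proof -
    have eq: "x \<le> z0 \<longleftrightarrow> y \<le> z0" using assms(3) z0 by (meson not_le)
    show ?thesis
    proof (cases "x \<le> z0")
      case True
      then have "{w \<in> insert x (set z). w \<le> z0} = insert x {w \<in> set z. w \<le> z0}"
        "{w \<in> insert y (set z). w \<le> z0} = insert y {w \<in> set z. w \<le> z0}"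
        using eq by auto
      then show ?thesis using assms by simp
    next
      case False
      then have "{w \<in> insert x (set z). w \<le> z0} = {w \<in> set z. w \<le> z0}"
        "{w \<in> insert y (set z). w \<le> z0} = {w \<in> set z. w \<le> z0}"
        using eq by auto
      then show ?thesis by simp
    qed
  qed
  show ?thesis unfolding std_def using hd tl by simp
qed



lemma std_map_mono:
  assumes mono: "\<forall>a\<in>set u. \<forall>b\<in>set u. a < b \<longrightarrow> f a < f b"
  shows "std (map f u) = std u"
proof -
  have le: "f a \<le> f b \<longleftrightarrow> a \<le> b" if "a \<in> set u" "b \<in> set u" for a b
  proof
    assume "f a \<le> f b"
    show "a \<le> b"
    proof (rule ccontr)
      assume "\<not> a \<le> b" then have "b < a" by simp
      then have "f b < f a" using mono that by blast
      then show False using \<open>f a \<le> f b\<close> by simp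
    qed
  next
    assume "a \<le> b"
    then consider "a = b" | "a < b" by linarith
    then show "f a \<le> f b" using mono that by (cases) (auto intro: less_imp_le)
  qed
  have inj: "inj_on f (set u)"
  proof (rule inj_onI)
    fix a b assume "a \<in> set u" "b \<in> set u" "f a = f b"
    then show "a = b" using le by (metis order_antisym order_refl)
  qed
  have "card {y \<in> f ` set u. y \<le> f x} = card {y \<in> set u. y \<le> x}" if x: "x \<in> set u" for x
  proof -
    have "{y \<in> f ` set u. y \<le> f x} = f ` {y \<in> set u. y \<le> x}" using le x by auto
    moreover have "inj_on f {y \<in> set u. y \<le> x}" using inj by (rule inj_on_subset) auto
    ultimately show ?thesis by (simp add: card_image)
  qed
  then show ?thesis unfolding std_def by simp
qed

lemma std_perm:
  assumes "m \<in> perms c" shows "std m = m"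
proof -
  have "card {y \<in> {1..c}. y \<le> x} = x" if "x \<in> {1..c}" for x
  proof -
    have "{y \<in> {1..c}. y \<le> x} = {1..x}" using that by auto
    then show ?thesis by simp
  qed
  moreover have "set m = {1..c}" using assms by (simp add: perms_def)
  ultimately show ?thesis unfolding std_def by (intro map_idI) simp
qed

lemma rk_less_card: assumes "finite A" "x \<in> A" shows "rk A x < card A"
proof -
  have "{y \<in> A. y < x} \<subset> A" using assms by auto
  then show ?thesis unfolding rk_def using assms by (simp add: psubset_card_mono)
qed

lemma rk_mono: assumes "finite A" "x \<in> A" "x < y" shows "rk A x < rk A y"
proof -
  have "{z \<in> A. z < x} \<subset> {z \<in> A. z < y}" using assms by auto
  then show ?thesis unfolding rk_def using assms by (simp add: psubset_card_mono)
qed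

lemma rk_less_iff: assumes "finite A" "x \<in> A" "y \<in> A" shows "rk A x < rk A y \<longleftrightarrow> x < y"
  using rk_mono[OF assms(1,2)] rk_mono[OF assms(1,3)] by (metis less_asym linorder_neqE_nat)

lemma rk_inj: assumes "finite A" "x \<in> A" "y \<in> A" "rk A x = rk A y" shows "x = y"
  using rk_mono[OF assms(1,2)] rk_mono[OF assms(1,3)] assms(4) by (metis less_irrefl linorder_neqE_nat)

lemma strict_sorted_rk:
  assumes "sorted_wrt (<) l" "k < length l"
  shows "rk (set l) (l ! k) = k"
proof -
  have "{y \<in> set l. y < l ! k} = (\<lambda>i. l ! i) ` {..<k}"
  proof (intro set_eqI iffI)
    fix y assume "y \<in> {y \<in> set l. y < l ! k}"
    then obtain i where i: "i < length l" "y = l ! i" "l ! i < l ! k" by (auto simp: in_set_conv_nth)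
    have "i < k"
    proof (rule ccontr)
      assume "\<not> i < k"
      then have "k \<le> i" by simp
      then have "l ! k \<le> l ! i" using assms i
        by (metis le_less order.strict_implies_order sorted_wrt_nth_less)
      then show False using i by simp
    qed
    then show "y \<in> (\<lambda>i. l ! i) ` {..<k}" using i by auto
  next
    fix y assume "y \<in> (\<lambda>i. l ! i) ` {..<k}"
    then obtain i where "i < k" "y = l ! i" by auto
    then show "y \<in> {y \<in> set l. y < l ! k}" using assms by (auto intro: sorted_wrt_nth_less)
  qed
  moreover have "inj_on (\<lambda>i. l ! i) {..<k}"
    using assms strict_sorted_iff[of l] by (auto simp: inj_on_def nth_eq_iff_index_eq)
  ultimately show ?thesis unfolding rk_def by (simp add: card_image)
qed

lemma rk_exists:
  assumes "finite A" "k < card A" shows "\<exists>x\<in>A. rk A x = k"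
proof -
  obtain l where l: "sorted_wrt (<) l" "set l = A"
    using ex1_sorted_list_for_set_if_finite[OF assms(1)] by auto
  then have "length l = card A" using strict_sorted_iff distinct_card by metis
  then show ?thesis using strict_sorted_rk[of l k] assms l by (metis nth_mem)
qed

lemma rk_remove:
  assumes "finite A" "x \<in> A" "y \<in> A" "x \<noteq> y"
  shows "rk (A - {x}) y = (if x < y then rk A y - 1 else rk A y)"
proof -
  show ?thesis
  proof (cases "x < y")
    case True
    then have "{z \<in> A. z < y} = insert x {z \<in> A - {x}. z < y}" using assms by auto
    then have "rk A y = Suc (rk (A - {x}) y)" unfolding rk_def using assms by simp
    then show ?thesis using True by simp
  next
    case False
    then have "{z \<in> A. z < y} = {z \<in> A - {x}. z < y}" using assms by auto
    then show ?thesis using False unfolding rk_def by simp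
  qed
qed

lemma rk_max:
  assumes "finite A" "x \<in> A" "rk A x = card A - 1" "y \<in> A" "y \<noteq> x"
  shows "y < x"
proof -
  have s: "{z \<in> A. z < x} \<subseteq> A - {x}" by auto
  have "card {z \<in> A. z < x} = card (A - {x})" using assms unfolding rk_def by simp
  then have "{z \<in> A. z < x} = A - {x}" using s assms(1) by (simp add: card_subset_eq)
  then show ?thesis using assms by auto
qed

lemma rk_adj:
  assumes "finite A" "x \<in> A" "y \<in> A" "rk A y = Suc (rk A x)" "w \<in> A" "w \<noteq> x" "w \<noteq> y"
  shows "w < x \<longleftrightarrow> w < y"
proof
  assume "w < x" then show "w < y" using rk_less_iff assms by (metis Suc_lessD less_trans not_less_eq)
next
  assume wy: "w < y"
  show "w < x"
  proof (rule ccontr)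
    assume "\<not> w < x"
    then have "x < w" using assms by simp
    then have "rk A x < rk A w" "rk A w < rk A y"
      using rk_less_iff[OF assms(1) assms(2) assms(5)] rk_less_iff[OF assms(1) assms(5) assms(3)] wy by auto
    then show False using assms(4) by simp
  qed
qed



lemma rotate_to_head:
  assumes "y \<in> set u" shows "\<exists>k z. rotate k u = y # z"
proof -
  obtain i where i: "i < length u" "u ! i = y" using assms by (auto simp: in_set_conv_nth)
  have "rotate i u = drop i u @ take i u" using i by (simp add: rotate_drop_take)
  also have "drop i u = y # drop (Suc i) u" using i Cons_nth_drop_Suc by metis
  finally show ?thesis by auto
qed

locale hs =
  fixes m :: "nat list" and c :: nat
  assumes c1: "c > 1" and mperm: "m \<in> perms c"
begin

abbreviation sh where "sh \<equiv> cyc_shifts m"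

lemma len_m: "length m = c"
proof -
  have "distinct m" "set m = {1..c}" using mperm by (auto simp: perms_def)
  then show ?thesis using distinct_card by fastforce
qed

lemma m_sh: "m \<in> sh"
  unfolding cyc_shifts_def using len_m c1 by (auto intro!: exI[of _ 0])

lemma sh_len: "s \<in> sh \<Longrightarrow> length s = c"
  unfolding cyc_shifts_def using len_m by auto

lemma sh_rot: assumes "s \<in> sh" shows "rotate k s \<in> sh"
proof -
  obtain a where a: "s = rotate a m" "a < c" using assms len_m unfolding cyc_shifts_def by auto
  have "rotate k s = rotate ((k + a) mod c) m"
    using a len_m by (metis rotate_conv_mod rotate_rotate)
  moreover have "(k + a) mod c < c" using c1 by simp
  ultimately show ?thesis unfolding cyc_shifts_def using len_m by auto
qed

lemma hit_len: "std u \<in> sh \<Longrightarrow> length u = c"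
  using sh_len by (metis length_std)

definition rstep :: "nat list \<Rightarrow> nat list \<Rightarrow> bool" where
  "rstep u v \<longleftrightarrow> (\<exists>a b w k. u = a @ w @ b \<and> v = a @ rotate k w @ b \<and> std w \<in> sh)"

definition E :: "nat list \<Rightarrow> nat list \<Rightarrow> bool" where
  "E = rstep\<^sup>*\<^sup>*"

lemma rstep_sym: assumes "rstep u v" shows "rstep v u"
proof -
  obtain a b w k where h: "u = a @ w @ b" "v = a @ rotate k w @ b" "std w \<in> sh"
    using assms unfolding rstep_def by blast
  have lw: "length w = c" using h(3) hit_len by blast
  define j where "j = c - k mod c"
  have "k mod c < c" using c1 by simp
  then have "j + k = c + k div c * c" unfolding j_def using div_mult_mod_eq[of k c] by linarith
  then have "(j + k) mod c = 0" by simp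
  then have "rotate j (rotate k w) = w" using lw
    by (metis rotate_conv_mod rotate_rotate rotate0 id_apply)
  moreover have "std (rotate k w) \<in> sh" using h(3) by (simp add: std_rotate sh_rot)
  ultimately show ?thesis unfolding rstep_def using h by metis
qed

lemma E_refl[simp]: "E u u" unfolding E_def by simp

lemma E_trans: "E u v \<Longrightarrow> E v w \<Longrightarrow> E u w" unfolding E_def by simp

lemma E_sym: assumes "E u v" shows "E v u"
  using assms unfolding E_def
proof (induction rule: rtranclp_induct)
  case base then show ?case by simp
next
  case (step y z)
  then show ?case using rstep_sym by (meson converse_rtranclp_into_rtranclp)
qed

lemma rstep_ctx: "rstep u v \<Longrightarrow> rstep (a @ u @ b) (a @ v @ b)"
  unfolding rstep_def by (metis append.assoc)

lemma E_ctx: assumes "E u v" shows "E (a @ u @ b) (a @ v @ b)"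
  using assms unfolding E_def
proof (induction rule: rtranclp_induct)
  case base then show ?case by simp
next
  case (step y z)
  then show ?case using rstep_ctx by (meson rtranclp.rtrancl_into_rtrancl)
qed

lemma E_ctx1: "E u v \<Longrightarrow> E (x # u) (x # v)" using E_ctx[of u v "[x]" "[]"] by simp
lemma E_ctx2: "E u v \<Longrightarrow> E (u @ b) (v @ b)" using E_ctx[of u v "[]" b] by simp

lemma rstep_inv: "rstep u v \<Longrightarrow> set u = set v \<and> (distinct u \<longleftrightarrow> distinct v) \<and> length u = length v"
  unfolding rstep_def by auto

lemma E_inv: assumes "E u v" shows "set u = set v \<and> (distinct u \<longleftrightarrow> distinct v) \<and> length u = length v"
  using assms unfolding E_def
  by (induction rule: rtranclp_induct) (auto dest: rstep_inv)

lemma rot_E: assumes "std w \<in> sh" shows "E w (rotate k w)"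
proof -
  have "rstep w (rotate k w)" unfolding rstep_def using assms
    by (intro exI[of _ "[]"] exI[of _ "[]"] exI[of _ w] exI[of _ k]) simp
  then show ?thesis unfolding E_def by simp
qed

lemma hit_equiv:
  assumes "std u1 \<in> sh" "std u2 \<in> sh" "set u1 = set u2"
  shows "E u1 u2"
proof -
  obtain a where a: "std u1 = rotate a m" "a < c" using assms(1) len_m unfolding cyc_shifts_def by auto
  obtain b where b: "std u2 = rotate b m" "b < c" using assms(2) len_m unfolding cyc_shifts_def by auto
  define k where "k = b + c - a"
  have "std (rotate k u1) = rotate (k + a) m" using a by (simp add: std_rotate rotate_rotate)
  also have "k + a = b + c" unfolding k_def using a by simp
  also have "rotate (b + c) m = rotate b m" using len_m
    by (metis mod_add_self2 rotate_conv_mod)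
  finally have "std (rotate k u1) = std u2" using b by simp
  then have "rotate k u1 = u2" using std_inj assms(3) by (metis set_rotate)
  then show ?thesis using rot_E[OF assms(1)] by metis
qed

end

context hs begin
lemma hit_exists:
  assumes "finite S" "card S = c"
  shows "\<exists>u. distinct u \<and> set u = S \<and> std u \<in> sh"
proof -
  obtain l where l: "sorted_wrt (<) l" "set l = S"
    using ex1_sorted_list_for_set_if_finite[OF assms(1)] by auto
  have ll: "length l = c" using l assms strict_sorted_iff distinct_card by metis
  have sm: "set m = {1..c}" "distinct m" using mperm by (auto simp: perms_def)
  define f where "f i = l ! (i - 1)" for i
  have mono: "\<forall>a\<in>set m. \<forall>b\<in>set m. a < b \<longrightarrow> f a < f b"
  proof (intro ballI impI)
    fix a b assume "a \<in> set m" "b \<in> set m" "a < b"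
    then have "a - 1 < b - 1" "b - 1 < length l" using sm ll by auto
    then show "f a < f b" unfolding f_def using l(1) sorted_wrt_nth_less by blast
  qed
  have inj: "inj_on f (set m)"
    using mono by (metis inj_onI linorder_neqE_nat less_irrefl)
  have "std (map f m) = m" using std_map_mono[OF mono] std_perm[OF mperm] by simp
  moreover have "distinct (map f m)" using inj sm by (simp add: distinct_map)
  moreover have "set (map f m) = S"
  proof -
    have "f ` {1..c} = set l"
    proof (intro set_eqI iffI)
      fix y assume "y \<in> f ` {1..c}"
      then show "y \<in> set l" using ll unfolding f_def by auto
    next
      fix y assume "y \<in> set l"
      then obtain i where "i < c" "l ! i = y" using ll by (auto simp: in_set_conv_nth)
      then show "y \<in> f ` {1..c}" unfolding f_def by (intro image_eqI[of _ _ "Suc i"]) auto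
    qed
    then show ?thesis using sm l by simp
  qed
  ultimately show ?thesis using m_sh by metis
qed

end

context hs begin
lemma BL1:
  assumes "std u \<in> sh" "distinct (u @ [x])" "y \<in> set u"
    "\<forall>w\<in>set u. w \<noteq> y \<longrightarrow> (w < x \<longleftrightarrow> w < y)"
  shows "\<exists>u'. std u' \<in> sh \<and> E (u @ [x]) (y # u')"
proof -
  obtain k z where kz: "rotate k u = y # z" using rotate_to_head[OF assms(3)] by blast
  have e1: "E (u @ [x]) (rotate k u @ [x])" using rot_E[OF assms(1), of k] by (rule E_ctx2)
  have "distinct u" using assms(2) by simp
  then have dz: "distinct (y # z)" using kz by (metis distinct_rotate)
  have sz: "set z \<subseteq> set u" using kz by (metis set_rotate set_subset_Cons)
  have "std (x # z) = std (y # z)"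
    using assms(2,4) dz sz by (intro std_replace_head) auto
  moreover have "z @ [x] = rotate 1 (x # z)" by simp
  ultimately have "std (z @ [x]) = rotate 1 (std (y # z))" by (simp only: std_rotate)
  also have "std (y # z) = rotate k (std u)" using kz by (metis std_rotate)
  finally have "std (z @ [x]) \<in> sh" using sh_rot[OF assms(1), of "Suc k"] by simp
  then show ?thesis using e1 kz by auto
qed

lemma BL2:
  assumes "std u \<in> sh" "distinct (x # u)" "y \<in> set u"
    "\<forall>w\<in>set u. w \<noteq> y \<longrightarrow> (w < x \<longleftrightarrow> w < y)"
  shows "\<exists>u'. std u' \<in> sh \<and> E (x # u) (u' @ [y])"
proof -
  obtain k z where kz: "rotate k u = y # z" using rotate_to_head[OF assms(3)] by blast
  have r: "rotate (Suc k) u = z @ [y]" using kz by (simp add: rotate_Suc)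
  have e1: "E (x # u) (x # rotate (Suc k) u)" using rot_E[OF assms(1)] by (rule E_ctx1)
  have "distinct u" using assms(2) by simp
  then have dz: "distinct (y # z)" using kz by (metis distinct_rotate)
  have sz: "set z \<subseteq> set u" using kz by (metis set_rotate set_subset_Cons)
  have "std (x # z) = std (y # z)"
    using assms(2,4) dz sz by (intro std_replace_head) auto
  also have "std (y # z) = rotate k (std u)" using kz by (metis std_rotate)
  finally have "std (x # z) \<in> sh" using assms(1) by (simp add: sh_rot)
  then show ?thesis using e1 r by (intro exI[of _ "x # z"]) auto
qed

end

context hs begin

definition NL :: "nat set \<Rightarrow> nat \<Rightarrow> nat list \<Rightarrow> bool" where
  "NL T x w \<longleftrightarrow> distinct w \<and> set w = T \<and> (\<exists>u. w = x # u \<and> std u \<in> sh)"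
definition NR :: "nat set \<Rightarrow> nat \<Rightarrow> nat list \<Rightarrow> bool" where
  "NR T x w \<longleftrightarrow> distinct w \<and> set w = T \<and> (\<exists>u. w = u @ [x] \<and> std u \<in> sh)"

definition adj :: "nat set \<Rightarrow> nat \<Rightarrow> nat \<Rightarrow> bool" where
  "adj T x y \<longleftrightarrow> rk T y = Suc (rk T x) \<or> rk T x = Suc (rk T y)"

lemma par_aux: assumes "(a::nat) \<le> b" "a mod 2 = b mod 2" shows "b = a + 2 * ((b - a) div 2)"
proof -
  have "even (b - a)" using assms(2) by (simp add: even_diff_nat parity_cases even_add) (metis odd_iff_mod_2_eq_one even_iff_mod_2_eq_zero mod2_eq_if)
  then show ?thesis using assms(1) by simp
qed
lemma par_aux3: "0 < (a::nat) \<Longrightarrow> (a - 1) mod 2 \<noteq> a mod 2"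
  by (cases a) (auto simp: mod2_eq_if)
lemma par_aux2: "(a::nat) mod 2 \<noteq> b mod 2 \<Longrightarrow> b mod 2 \<noteq> d mod 2 \<Longrightarrow> a mod 2 = d mod 2"
  by (auto simp: mod2_eq_if split: if_splits)

context fixes T :: "nat set" assumes fT: "finite T" and cT: "card T = Suc c"
begin

lemma NL_ex: assumes "x \<in> T" shows "\<exists>w. NL T x w"
proof -
  have "card (T - {x}) = c" using assms fT cT by simp
  then obtain u where u: "distinct u" "set u = T - {x}" "std u \<in> sh" using hit_exists fT by blast
  then show ?thesis unfolding NL_def using assms by (intro exI[of _ "x # u"]) auto
qed

lemma NR_ex: assumes "x \<in> T" shows "\<exists>w. NR T x w"
proof -
  have "card (T - {x}) = c" using assms fT cT by simp
  then obtain u where u: "distinct u" "set u = T - {x}" "std u \<in> sh" using hit_exists fT by blast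
  then show ?thesis unfolding NR_def using assms by (intro exI[of _ "u @ [x]"]) auto
qed

lemma NL_uniq: assumes "NL T x w1" "NL T x w2" shows "E w1 w2"
proof -
  obtain u1 u2 where u: "w1 = x # u1" "std u1 \<in> sh" "w2 = x # u2" "std u2 \<in> sh"
    using assms unfolding NL_def by blast
  have "set u1 = T - {x}" "set u2 = T - {x}" using assms u unfolding NL_def by auto
  then have "E u1 u2" using hit_equiv u by simp
  then show ?thesis using u E_ctx1 by simp
qed

lemma NR_uniq: assumes "NR T x w1" "NR T x w2" shows "E w1 w2"
proof -
  obtain u1 u2 where u: "w1 = u1 @ [x]" "std u1 \<in> sh" "w2 = u2 @ [x]" "std u2 \<in> sh"
    using assms unfolding NR_def by blast
  have "set u1 = T - {x}" "set u2 = T - {x}" using assms u unfolding NR_def by auto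
  then have "E u1 u2" using hit_equiv u by simp
  then show ?thesis using u E_ctx2 by simp
qed

lemma adj_gap:
  assumes "adj T x y" "x \<in> T" "y \<in> T" "w \<in> T" "w \<noteq> x" "w \<noteq> y"
  shows "w < x \<longleftrightarrow> w < y"
  using assms rk_adj[OF fT, of x y w] rk_adj[OF fT, of y x w] unfolding adj_def by auto

lemma adj_neq: "adj T x y \<Longrightarrow> x \<noteq> y" unfolding adj_def by auto

lemma NR_NL_adj:
  assumes "NR T x w" "y \<in> T" "adj T x y"
  shows "\<exists>w'. NL T y w' \<and> E w w'"
proof -
  obtain u where u: "w = u @ [x]" "std u \<in> sh" "distinct w" "set w = T"
    using assms unfolding NR_def by blast
  have xT: "x \<in> T" using u by auto
  have yu: "y \<in> set u" using assms(2) adj_neq[OF assms(3)] u by auto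
  have g: "\<forall>v\<in>set u. v \<noteq> y \<longrightarrow> (v < x \<longleftrightarrow> v < y)"
    using adj_gap[OF assms(3) xT assms(2)] u by auto
  obtain u' where u': "std u' \<in> sh" "E (u @ [x]) (y # u')"
    using BL1[OF u(2) _ yu g] u by auto
  then have "NL T y (y # u')" using E_inv[OF u'(2)] u unfolding NL_def by auto
  then show ?thesis using u' u by auto
qed

lemma NL_NR_adj:
  assumes "NL T x w" "y \<in> T" "adj T x y"
  shows "\<exists>w'. NR T y w' \<and> E w w'"
proof -
  obtain u where u: "w = x # u" "std u \<in> sh" "distinct w" "set w = T"
    using assms unfolding NL_def by blast
  have xT: "x \<in> T" using u by auto
  have yu: "y \<in> set u" using assms(2) adj_neq[OF assms(3)] u by auto
  have g: "\<forall>v\<in>set u. v \<noteq> y \<longrightarrow> (v < x \<longleftrightarrow> v < y)"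
    using adj_gap[OF assms(3) xT assms(2)] u by auto
  obtain u' where u': "std u' \<in> sh" "E (x # u) (u' @ [y])"
    using BL2[OF u(2) _ yu g] u by auto
  then have "NR T y (u' @ [y])" using E_inv[OF u'(2)] u unfolding NR_def by auto
  then show ?thesis using u' u by auto
qed

lemma rk_el: "k < Suc c \<Longrightarrow> \<exists>z\<in>T. rk T z = k"
  using rk_exists[OF fT] cT by simp

lemma rk_lt: "x \<in> T \<Longrightarrow> rk T x < Suc c"
  using rk_less_card[OF fT] cT by simp

lemma NL_step2:
  "\<forall>x w y. NL T x w \<longrightarrow> y \<in> T \<longrightarrow> rk T y = rk T x + 2 * d \<longrightarrow> (\<exists>w'. NL T y w' \<and> E w w')"
proof (induction d)
  case 0
  show ?case
  proof (intro allI impI)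
    fix x w y assume "NL T x w" "y \<in> T" "rk T y = rk T x + 2 * 0"
    then have "y = x" using rk_inj[OF fT] unfolding NL_def by auto
    then show "\<exists>w'. NL T y w' \<and> E w w'" using \<open>NL T x w\<close> by auto
  qed
next
  case (Suc d)
  show ?case
  proof (intro allI impI)
    fix x w y assume h: "NL T x w" "y \<in> T" "rk T y = rk T x + 2 * Suc d"
    have "rk T y < Suc c" using rk_lt[OF h(2)] .
    then obtain z where z: "z \<in> T" "rk T z = Suc (rk T x)" using rk_el[of "Suc (rk T x)"] h(3) by auto
    then obtain z' where z': "z' \<in> T" "rk T z' = Suc (rk T z)"
      using rk_el[of "Suc (rk T z)"] h(3) \<open>rk T y < Suc c\<close> by auto
    obtain w1 where w1: "NR T z w1" "E w w1" using NL_NR_adj[OF h(1) z(1)] z unfolding adj_def by auto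
    obtain w2 where w2: "NL T z' w2" "E w1 w2" using NR_NL_adj[OF w1(1) z'(1)] z' unfolding adj_def by auto
    have "rk T y = rk T z' + 2 * d" using h z z' by simp
    then obtain w3 where "NL T y w3" "E w2 w3" using Suc.IH w2 h(2) by blast
    then show "\<exists>w'. NL T y w' \<and> E w w'" using w1 w2 E_trans by blast
  qed
qed

lemma NL_par:
  assumes "NL T x w" "y \<in> T" "rk T y mod 2 = rk T x mod 2"
  shows "\<exists>w'. NL T y w' \<and> E w w'"
proof (cases "rk T x \<le> rk T y")
  case True
  then have "rk T y = rk T x + 2 * ((rk T y - rk T x) div 2)" using assms(3)
    by (intro par_aux) auto
  from NL_step2[rule_format, OF assms(1) assms(2) this] show ?thesis .
next
  case False
  have xT: "x \<in> T" using assms unfolding NL_def by auto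
  obtain w0 where w0: "NL T y w0" using NL_ex assms(2) by blast
  have "rk T x = rk T y + 2 * ((rk T x - rk T y) div 2)" using assms(3) False
    by (intro par_aux) auto
  from NL_step2[rule_format, OF w0 xT this] obtain w1 where "NL T x w1" "E w0 w1" by blast
  then have "E w w0" using NL_uniq[OF assms(1)] E_sym E_trans by blast
  then show ?thesis using w0 by blast
qed

lemma adj_ex: assumes "x \<in> T" shows "\<exists>z\<in>T. adj T x z \<and> (rk T z mod 2 \<noteq> rk T x mod 2)"
proof (cases "rk T x = 0")
  case True
  have "1 < Suc c" using c1 by simp
  then obtain z where "z \<in> T" "rk T z = 1" using rk_el by blast
  then show ?thesis using True unfolding adj_def by auto
next
  case False
  have "rk T x - 1 < Suc c" using rk_lt[OF assms] by simp
  then obtain z where "z \<in> T" "rk T z = rk T x - 1" using rk_el by blast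
  moreover have "rk T z mod 2 \<noteq> rk T x mod 2" using False calculation(2) par_aux3[of "rk T x"] by simp
  ultimately show ?thesis using False unfolding adj_def by (intro bexI[of _ z]) auto
qed

lemma NL_NR:
  assumes "NL T x w" "y \<in> T" "rk T y mod 2 \<noteq> rk T x mod 2"
  shows "\<exists>w'. NR T y w' \<and> E w w'"
proof -
  obtain z where z: "z \<in> T" "adj T y z" "rk T z mod 2 \<noteq> rk T y mod 2" using adj_ex assms(2) by blast
  have "rk T z mod 2 = rk T x mod 2" using par_aux2 z(3) assms(3) by metis
  then obtain w1 where w1: "NL T z w1" "E w w1" using NL_par assms(1) z(1) by blast
  have "adj T z y" using z(2) unfolding adj_def by auto
  then obtain w2 where "NR T y w2" "E w1 w2" using NL_NR_adj w1(1) assms(2) by blast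
  then show ?thesis using w1 E_trans by blast
qed

lemma NR_NL:
  assumes "NR T x w" "y \<in> T" "rk T y mod 2 \<noteq> rk T x mod 2"
  shows "\<exists>w'. NL T y w' \<and> E w w'"
proof -
  have xT: "x \<in> T" using assms unfolding NR_def by auto
  obtain z where z: "z \<in> T" "adj T x z" "rk T z mod 2 \<noteq> rk T x mod 2" using adj_ex xT by blast
  obtain w1 where w1: "NL T z w1" "E w w1" using NR_NL_adj assms(1) z by blast
  have "rk T y mod 2 = rk T z mod 2" using par_aux2 z(3) assms(3) by metis
  then obtain w2 where "NL T y w2" "E w1 w2" using NL_par w1(1) assms(2) by blast
  then show ?thesis using w1 E_trans by blast
qed

lemma NR_par:
  assumes "NR T x w" "y \<in> T" "rk T y mod 2 = rk T x mod 2"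
  shows "\<exists>w'. NR T y w' \<and> E w w'"
proof -
  have xT: "x \<in> T" using assms unfolding NR_def by auto
  obtain z where z: "z \<in> T" "adj T x z" "rk T z mod 2 \<noteq> rk T x mod 2" using adj_ex xT by blast
  obtain w1 where w1: "NL T z w1" "E w w1" using NR_NL_adj assms(1) z by blast
  have "rk T y mod 2 \<noteq> rk T z mod 2" using z(3) assms(3) by simp
  then obtain w2 where "NR T y w2" "E w1 w2" using NL_NR w1(1) assms(2) by blast
  then show ?thesis using w1 E_trans by blast
qed

end
end


lemma puzzle:
  fixes P :: "nat \<Rightarrow> nat \<Rightarrow> bool" and c :: nat
  assumes c2: "c \<ge> 2"
  and H1: "\<And>i j i'. P i j \<Longrightarrow> i' \<le> c+1 \<Longrightarrow> i' \<noteq> j \<Longrightarrow>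
      (if j < i' then i' - 1 else i') mod 2 = (if j < i then i - 1 else i) mod 2 \<Longrightarrow> P i' j"
  and H2: "\<And>i j j'. P i j \<Longrightarrow> j' \<le> c+1 \<Longrightarrow> j' \<noteq> i \<Longrightarrow>
      (if i < j' then j' - 1 else j') mod 2 = (if i < j then j - 1 else j) mod 2 \<Longrightarrow> P i j'"
  and H3: "\<And>i j. c = 2 \<Longrightarrow> P i j \<Longrightarrow> i \<le> c+1 \<Longrightarrow> j \<le> c+1 \<Longrightarrow> i \<noteq> j \<Longrightarrow>
      \<exists>h \<le> c+1. h \<noteq> i \<and> h \<noteq> j \<and> P h j"
  and start: "P i j" "i \<le> c+1" "j \<le> c+1" "i \<noteq> j"
  shows "\<exists>t \<le> 1. P t (c+1)"
proof (cases "c = 2")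
  case True
  have g01: "P 0 1 \<Longrightarrow> ?thesis" using H2[of 0 1 3] True by auto
  have g03: "P 0 3 \<Longrightarrow> ?thesis" using True by auto
  have g13: "P 1 3 \<Longrightarrow> ?thesis" using True by auto
  have g10: "P 1 0 \<Longrightarrow> ?thesis" using H2[of 1 0 3] True by auto
  have g20: "P 2 0 \<Longrightarrow> ?thesis" using H2[of 2 0 3] H1[of 2 3 0] True by auto
  have g23: "P 2 3 \<Longrightarrow> ?thesis" using H1[of 2 3 0] True by auto
  have g30: "P 3 0 \<Longrightarrow> ?thesis" using H1[of 3 0 1] g10 True by auto
  have g31: "P 3 1 \<Longrightarrow> ?thesis" using H1[of 3 1 0] g01 True by auto
  have g32: "P 3 2 \<Longrightarrow> ?thesis" using H2[of 3 2 0] g30 True by auto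
  have g02: "P 0 2 \<Longrightarrow> ?thesis" using H1[of 0 2 3] g32 True by auto
  have g12: "P 1 2 \<Longrightarrow> ?thesis"
  proof -
    assume "P 1 2"
    then obtain h where "h \<le> 3" "h \<noteq> 1" "h \<noteq> 2" "P h 2" using H3[of 1 2] True by auto
    then have "h = 0 \<or> h = 3" by auto
    then show ?thesis using g02 g32 \<open>P h 2\<close> by auto
  qed
  have g21: "P 2 1 \<Longrightarrow> ?thesis"
  proof -
    assume "P 2 1"
    then obtain h where "h \<le> 3" "h \<noteq> 1" "h \<noteq> 2" "P h 1" using H3[of 2 1] True by auto
    then have "h = 0 \<or> h = 3" by auto
    then show ?thesis using g01 g31 \<open>P h 1\<close> by auto
  qed
  have "i \<in> {0,1,2,3}" "j \<in> {0,1,2,3}" using start True by auto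
  then show ?thesis using start g01 g03 g13 g10 g20 g23 g30 g31 g32 g02 g12 g21 by auto
next
  case False
  then have c3: "c \<ge> 3" using c2 by simp
  obtain j1 where j1: "P i j1" "2 \<le> j1" "j1 \<le> c+1" "j1 \<noteq> i"
  proof (cases "2 \<le> j")
    case True then show ?thesis using that start by auto
  next
    case False
    let ?b = "(if i < j then j - 1 else j) mod 2"
    have cands: "\<exists>j'\<in>{2,3,4}. j' \<noteq> i \<and> (if i < j' then j' - 1 else j') mod 2 = ?b"
    proof -
      consider "i < 2" | "i = 2" | "i = 3" | "i = 4" | "i > 4" by linarith
      then show ?thesis
      proof cases
        case 1 then show ?thesis by (cases "?b = 0") auto
      next
        case 2 then show ?thesis by (cases "?b = 0") auto
      next
        case 3 then show ?thesis by (cases "?b = 0") auto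
      next
        case 4 then show ?thesis by (cases "?b = 0") auto
      next
        case 5 then show ?thesis by (cases "?b = 0") auto
      qed
    qed
    then obtain j' where "j' \<in> {2,3,4}" "j' \<noteq> i" "(if i < j' then j' - 1 else j') mod 2 = ?b" by blast
    moreover have "j' \<le> c + 1" using \<open>j' \<in> {2,3,4}\<close> c3 by auto
    ultimately have "P i j'" using H2[OF start(1), of j'] by blast
    moreover have "2 \<le> j'" using \<open>j' \<in> {2,3,4}\<close> by auto
    ultimately show ?thesis using that \<open>j' \<le> c + 1\<close> \<open>j' \<noteq> i\<close> by blast
  qed
  define t0 where "t0 = (if j1 < i then i - 1 else i) mod 2"
  have t0: "P t0 j1" "t0 \<le> 1"
  proof -
    have "t0 \<le> 1" unfolding t0_def by simp
    moreover have "t0 < j1" using \<open>t0 \<le> 1\<close> j1 by simp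
    moreover have "(if j1 < t0 then t0 - 1 else t0) mod 2 = (if j1 < i then i - 1 else i) mod 2"
      using calculation unfolding t0_def by simp
    ultimately show "P t0 j1" "t0 \<le> 1" using H1[OF j1(1), of t0] by auto
  qed
  show ?thesis
  proof (cases "(j1 - 1) mod 2 = c mod 2")
    case True
    have "(if t0 < c+1 then c + 1 - 1 else c + 1) mod 2 = (if t0 < j1 then j1 - 1 else j1) mod 2"
      using True t0 j1 c3 by simp
    then have "P t0 (c+1)" using H2[OF t0(1), of "c+1"] t0 c3 by simp
    then show ?thesis using t0 by auto
  next
    case bad: False
    show ?thesis
    proof (cases "c \<ge> 4")
      case True
      have tt: "t0 = 0 \<or> t0 = 1" using t0 by auto
      have ja: "t0 < j1" using t0 j1 by simp
      show ?thesis
      proof (cases "even c")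
        case ev: True
        have jm: "(j1 - 1) mod 2 = 1" using bad ev j1 by (auto simp: mod2_eq_if split: if_splits)
        have cm: "c mod 2 = 0" using ev by auto
        have p1: "P t0 2" using H2[OF t0(1), of 2] tt ja jm c3 by auto
        from tt show ?thesis
        proof
          assume z: "t0 = 0"
          have "P 3 2" using H1[OF p1, of 3] z True by simp
          then have "P 3 (c+1)" using H2[of 3 2 "c+1"] True cm by simp
          then have "P 1 (c+1)" using H1[of 3 "c+1" 1] True by simp
          then show ?thesis by auto
        next
          assume z: "t0 = 1"
          have "P 4 2" using H1[OF p1, of 4] z True by simp
          then have "P 4 (c+1)" using H2[of 4 2 "c+1"] True cm by simp
          then have "P 0 (c+1)" using H1[of 4 "c+1" 0] True by simp
          then show ?thesis by auto
        qed
      next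
        case od: False
        have c5: "c \<ge> 5" using od True by (cases "c = 4") auto
        have jm: "(j1 - 1) mod 2 = 0" using bad od j1 by (auto simp: mod2_eq_if split: if_splits)
        have cm: "c mod 2 = 1" using od by (simp add: mod2_eq_if)
        have p1: "P t0 3" using H2[OF t0(1), of 3] tt ja jm c3 by auto
        from tt show ?thesis
        proof
          assume z: "t0 = 0"
          have "P 5 3" using H1[OF p1, of 5] z c5 by simp
          then have "P 5 (c+1)" using H2[of 5 3 "c+1"] c5 cm by simp
          then have "P 1 (c+1)" using H1[of 5 "c+1" 1] c5 by simp
          then show ?thesis by auto
        next
          assume z: "t0 = 1"
          have "P 4 3" using H1[OF p1, of 4] z c5 by simp
          then have "P 4 (c+1)" using H2[of 4 3 "c+1"] c5 cm by simp
          then have "P 0 (c+1)" using H1[of 4 "c+1" 0] c5 by simp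
          then show ?thesis by auto
        qed
      qed
    next
      case False
      then have c3': "c = 3" using c3 by simp
      have "j1 = 2 \<or> j1 = 3 \<or> j1 = 4" using j1 c3' by auto
      then have "j1 = 3" using bad c3' by auto
      then have p: "P t0 3" using t0 by simp
      have "t0 = 0 \<or> t0 = 1" using t0 by auto
      then show ?thesis
      proof
        assume "t0 = 0"
        then have "P 0 3" using p by simp
        then have "P 0 1" using H2[of 0 3 1] c3' by simp
        then have "P 3 1" using H1[of 0 1 3] c3' by simp
        then have "P 3 4" using H2[of 3 1 4] c3' by simp
        then have "P 1 4" using H1[of 3 4 1] c3' by simp
        then show ?thesis using c3' by auto
      next
        assume "t0 = 1"
        then have "P 1 3" using p by simp
        then have "P 4 3" using H1[of 1 3 4] c3' by simp
        then have "P 4 1" using H2[of 4 3 1] c3' by simp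
        then have "P 2 1" using H1[of 4 1 2] c3' by simp
        then have "P 2 4" using H2[of 2 1 4] c3' by simp
        then have "P 0 4" using H1[of 2 4 0] c3' by simp
        then show ?thesis using c3' by auto
      qed
    qed
  qed
qed


context hs begin

definition nonav :: "nat list \<Rightarrow> bool" where
  "nonav w \<longleftrightarrow> (\<exists>a u b. w = a @ u @ b \<and> std u \<in> sh)"

definition isPQ :: "nat set \<Rightarrow> nat \<Rightarrow> nat list \<Rightarrow> bool" where
  "isPQ T k w \<longleftrightarrow> distinct w \<and> set w = T \<and> (\<exists>x u r. w = x # u @ r \<and> std u \<in> sh \<and> rk T x = k
      \<and> sorted_wrt (<) r \<and> (\<forall>y\<in>set u. \<forall>z\<in>set r. y < z))"

definition Mid :: "nat set \<Rightarrow> nat \<Rightarrow> nat \<Rightarrow> nat list \<Rightarrow> bool" where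
  "Mid U v x w \<longleftrightarrow> distinct w \<and> set w = U \<and> (\<exists>u. w = v # u @ [x] \<and> std u \<in> sh)"

lemma NL_isPQ: "NL T y w \<Longrightarrow> isPQ T (rk T y) w"
  unfolding NL_def isPQ_def by (metis append_Nil2 empty_iff list.set(1) sorted_wrt.simps(1))

lemma base1:
  assumes "distinct w" "length w = Suc c" "nonav w"
  shows "\<exists>w' k. k \<le> 1 \<and> isPQ (set w) k w' \<and> E w w'"
proof -
  define T where "T = set w"
  have fT: "finite T" and cT: "card T = Suc c" unfolding T_def using distinct_card[OF assms(1)] assms(2) by auto
  obtain a u b where w: "w = a @ u @ b" "std u \<in> sh" using assms(3) unfolding nonav_def by blast
  have "length u = c" using hit_len w by simp
  then have "length a + length b = 1" using assms(2) w by simp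
  then consider "a = [] \<and> length b = 1" | "length a = 1 \<and> b = []" by (cases a) auto
  then show ?thesis
  proof cases
    case 1
    then obtain x where "b = [x]" by (auto simp: length_Suc_conv)
    then have nr: "NR T x w" unfolding NR_def T_def using assms 1 w by auto
    have xT: "x \<in> T" using nr unfolding NR_def by auto
    define k where "k = 1 - rk T x mod 2"
    have "k < Suc c" unfolding k_def using c1 by simp
    then obtain y where y: "y \<in> T" "rk T y = k" using rk_el[OF fT cT] by blast
    have "rk T y mod 2 \<noteq> rk T x mod 2" using y unfolding k_def by (auto simp: mod2_eq_if)
    then obtain w' where "NL T y w'" "E w w'" using NR_NL[OF fT cT nr y(1)] by blast
    moreover have "isPQ T k w'" using NL_isPQ[OF calculation(1)] y by simp
    moreover have "k \<le> 1" unfolding k_def by simp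
    ultimately show ?thesis unfolding T_def by blast
  next
    case 2
    then obtain x where "a = [x]" by (auto simp: length_Suc_conv)
    then have nl: "NL T x w" unfolding NL_def T_def using assms 2 w by auto
    define k where "k = rk T x mod 2"
    have "k < Suc c" unfolding k_def using c1 by simp
    then obtain y where y: "y \<in> T" "rk T y = k" using rk_el[OF fT cT] by blast
    have "rk T y mod 2 = rk T x mod 2" using y unfolding k_def by simp
    then obtain w' where "NL T y w'" "E w w'" using NL_par[OF fT cT nl y(1)] by blast
    moreover have "isPQ T k w'" using NL_isPQ[OF calculation(1)] y by simp
    moreover have "k \<le> 1" unfolding k_def by simp
    ultimately show ?thesis unfolding T_def by blast
  qed
qed

lemma Mid_start:
  assumes "distinct w" "length w = Suc (Suc c)" "nonav w"
  shows "\<exists>v x w'. Mid (set w) v x w' \<and> E w w'"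
proof -
  define U where "U = set w"
  have fU: "finite U" and cU: "card U = Suc (Suc c)" unfolding U_def using distinct_card[OF assms(1)] assms(2) by auto
  obtain a u b where w: "w = a @ u @ b" "std u \<in> sh" using assms(3) unfolding nonav_def by blast
  have "length u = c" using hit_len w by simp
  then have l2: "length a + length b = 2" using assms(2) w by simp
  consider "length a = 1 \<and> length b = 1" | "a = [] \<and> length b = 2" | "length a = 2 \<and> b = []"
    using l2 by (cases "length a") (auto, cases b, auto)
  then show ?thesis
  proof cases
    case 1
    then obtain v x where "a = [v]" "b = [x]" by (auto simp: length_Suc_conv)
    then have "Mid U v x w" unfolding Mid_def U_def using assms w by auto
    then show ?thesis unfolding U_def using E_refl by blast
  next
    case 2
    then obtain y x where ab: "a = []" "b = [y, x]" by (auto simp: length_Suc_conv numeral_2_eq_2)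
    define T where "T = U - {x}"
    have fT: "finite T" and cT: "card T = Suc c" unfolding T_def using fU cU assms(1) w ab U_def by auto
    have nr: "NR T y (u @ [y])" unfolding NR_def T_def U_def using assms(1) w ab by auto
    have yT: "y \<in> T" using nr unfolding NR_def by auto
    obtain z where z: "z \<in> T" "adj T y z" "rk T z mod 2 \<noteq> rk T y mod 2" using adj_ex[OF fT cT yT] by blast
    obtain w1 where w1: "NL T z w1" "E (u @ [y]) w1" using NR_NL_adj[OF fT cT nr z(1,2)] by blast
    obtain u1 where u1: "w1 = z # u1" "std u1 \<in> sh" using w1 unfolding NL_def by blast
    have e: "E w (z # u1 @ [x])" using E_ctx2[OF w1(2), of "[x]"] w ab u1 by simp
    then have "Mid U z x (z # u1 @ [x])" unfolding Mid_def U_def using E_inv[OF e] assms(1) u1 by auto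
    then show ?thesis using e unfolding U_def by blast
  next
    case 3
    then obtain v y where ab: "a = [v, y]" "b = []" by (auto simp: length_Suc_conv numeral_2_eq_2)
    define T where "T = U - {v}"
    have fT: "finite T" and cT: "card T = Suc c" unfolding T_def using fU cU assms(1) w ab U_def by auto
    have nl: "NL T y (y # u)" unfolding NL_def T_def U_def using assms(1) w ab by auto
    have yT: "y \<in> T" using nl unfolding NL_def by auto
    obtain z where z: "z \<in> T" "adj T y z" "rk T z mod 2 \<noteq> rk T y mod 2" using adj_ex[OF fT cT yT] by blast
    obtain w1 where w1: "NR T z w1" "E (y # u) w1" using NL_NR_adj[OF fT cT nl z(1,2)] by blast
    obtain u1 where u1: "w1 = u1 @ [z]" "std u1 \<in> sh" using w1 unfolding NR_def by blast
    have e: "E w (v # u1 @ [z])" using E_ctx1[OF w1(2), of v] w ab u1 by simp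
    then have "Mid U v z (v # u1 @ [z])" unfolding Mid_def U_def using E_inv[OF e] assms(1) u1 by auto
    then show ?thesis using e unfolding U_def by blast
  qed
qed

lemma Mid_v:
  assumes "Mid U v x w" "card U = Suc (Suc c)" "v' \<in> U" "v' \<noteq> x"
    "rk (U - {x}) v' mod 2 = rk (U - {x}) v mod 2"
  shows "\<exists>w'. Mid U v' x w' \<and> E w w'"
proof -
  obtain u where u: "w = v # u @ [x]" "std u \<in> sh" "distinct w" "set w = U" using assms(1) unfolding Mid_def by blast
  define T where "T = U - {x}"
  have fU: "finite U" using u by auto
  have fT: "finite T" and cT: "card T = Suc c" unfolding T_def using fU assms(2) u by auto
  have nl: "NL T v (v # u)" unfolding NL_def T_def using u by auto
  obtain w1 where w1: "NL T v' w1" "E (v # u) w1" using NL_par[OF fT cT nl] assms(3,4,5) unfolding T_def by blast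
  obtain u1 where u1: "w1 = v' # u1" "std u1 \<in> sh" using w1 unfolding NL_def by blast
  have e: "E w (v' # u1 @ [x])" using E_ctx2[OF w1(2), of "[x]"] u u1 by simp
  then have "Mid U v' x (v' # u1 @ [x])" unfolding Mid_def using E_inv[OF e] u u1 by auto
  then show ?thesis using e by blast
qed

lemma Mid_x:
  assumes "Mid U v x w" "card U = Suc (Suc c)" "x' \<in> U" "x' \<noteq> v"
    "rk (U - {v}) x' mod 2 = rk (U - {v}) x mod 2"
  shows "\<exists>w'. Mid U v x' w' \<and> E w w'"
proof -
  obtain u where u: "w = v # u @ [x]" "std u \<in> sh" "distinct w" "set w = U" using assms(1) unfolding Mid_def by blast
  define T where "T = U - {v}"
  have fU: "finite U" using u by auto
  have fT: "finite T" and cT: "card T = Suc c" unfolding T_def using fU assms(2) u by auto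
  have nr: "NR T x (u @ [x])" unfolding NR_def T_def using u by auto
  obtain w1 where w1: "NR T x' w1" "E (u @ [x]) w1" using NR_par[OF fT cT nr] assms(3,4,5) unfolding T_def by blast
  obtain u1 where u1: "w1 = u1 @ [x']" "std u1 \<in> sh" using w1 unfolding NR_def by blast
  have e: "E w (v # u1 @ [x'])" using E_ctx1[OF w1(2), of v] u u1 by simp
  then have "Mid U v x' (v # u1 @ [x'])" unfolding Mid_def using E_inv[OF e] u u1 by auto
  then show ?thesis using e by blast
qed

lemma std2: assumes "c = 2" "a \<noteq> b" shows "std [a, b] \<in> sh"
proof -
  have lm: "length m = 2" using len_m assms(1) by simp
  then obtain p q where pq: "m = [p, q]" by (auto simp: length_Suc_conv numeral_2_eq_2)
  have e12: "{1..(2::nat)} = {1,2}" by (simp add: numeral_2_eq_2 atLeastAtMostSuc_conv insert_commute)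
  have "set m = {1, 2}" "distinct m" using assms(1) mperm e12 by (simp_all add: perms_def)
  then have "p \<noteq> q" "{p, q} = {1, 2}" using pq by auto
  then have "(p = 1 \<and> q = 2) \<or> (p = 2 \<and> q = 1)" by (auto simp: doubleton_eq_iff)
  then have m12: "m = [1,2] \<or> m = [2,1]" using pq by auto
  have r: "rotate 1 m = [q, p]" using pq by simp
  have s12: "[1,2] \<in> sh" "[2,1] \<in> sh" using m12 m_sh sh_rot[OF m_sh, of 1] r pq by auto
  show ?thesis
  proof (cases "a < b")
    case True
    have "{y \<in> set [a, b]. y \<le> a} = {a}" "{y \<in> set [a, b]. y \<le> b} = {a, b}" using True by auto
    then have "std [a, b] = [1, 2]" unfolding std_def using assms(2) by simp
    then show ?thesis using s12 by simp
  next
    case False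
    then have ba: "b < a" using assms(2) by simp
    have "{y \<in> set [a, b]. y \<le> a} = {a, b}" "{y \<in> set [a, b]. y \<le> b} = {b}" using ba by auto
    then have "std [a, b] = [2, 1]" unfolding std_def using assms(2) by simp
    then show ?thesis using s12 by simp
  qed
qed

lemma Mid_c2:
  assumes "c = 2" "Mid U v x w"
  shows "\<exists>h w'. h \<in> U \<and> h \<noteq> v \<and> h \<noteq> x \<and> Mid U h x w' \<and> E w w'"
proof -
  obtain u where u: "w = v # u @ [x]" "std u \<in> sh" "distinct w" "set w = U" using assms(2) unfolding Mid_def by blast
  have "length u = 2" using hit_len u(2) assms(1) by simp
  then obtain h1 h2 where h: "u = [h1, h2]" by (auto simp: length_Suc_conv numeral_2_eq_2)
  have d: "v \<noteq> h1" "v \<noteq> h2" "h1 \<noteq> x" "h1 \<noteq> v" using u(3) h u(1) by auto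
  have w_eq: "w = [] @ [v, h1] @ [h2, x]" using u(1) h by simp
  have t_eq: "h1 # [v, h2] @ [x] = [] @ rotate 1 [v, h1] @ [h2, x]" by simp
  have "std [v, h1] \<in> sh" using std2[OF assms(1) d(1)] .
  then have "rstep w (h1 # [v, h2] @ [x])" unfolding rstep_def w_eq t_eq by blast
  then have e: "E w (h1 # [v, h2] @ [x])" unfolding E_def by (rule r_into_rtranclp)
  have "std [v, h2] \<in> sh" using std2[OF assms(1) d(2)] .
  moreover have "distinct (h1 # [v, h2] @ [x])" "set (h1 # [v, h2] @ [x]) = U"
    using E_inv[OF e] u(3,4) by auto
  ultimately have "Mid U h1 x (h1 # [v, h2] @ [x])" unfolding Mid_def by blast
  moreover have "h1 \<in> U" using u(1,4) h by auto
  ultimately show ?thesis using e d by blast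
qed

lemma Mid_fin:
  assumes "Mid U v x w" "card U = Suc (Suc c)" "rk U x = Suc c"
  shows "isPQ U (rk U v) w"
proof -
  obtain u where u: "w = v # u @ [x]" "std u \<in> sh" "distinct w" "set w = U" using assms(1) unfolding Mid_def by blast
  have fU: "finite U" using u(4) by blast
  have xU: "x \<in> U" using u(1,4) by auto
  have ux: "\<forall>y\<in>set u. y < x"
  proof
    fix y assume y: "y \<in> set u"
    then have "y \<in> U" "y \<noteq> x" using u by auto
    then show "y < x" using rk_max[OF fU xU _ \<open>y \<in> U\<close>] assms(2,3) by simp
  qed
  have "w = v # u @ [x] \<and> std u \<in> sh \<and> rk U v = rk U v \<and> sorted_wrt (<) [x] \<and> (\<forall>y\<in>set u. \<forall>z\<in>set [x]. y < z)"
    using u ux by simp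
  then show ?thesis unfolding isPQ_def using u(3,4) by blast
qed

end

context hs begin

lemma base2:
  assumes "distinct w" "length w = Suc (Suc c)" "nonav w"
  shows "\<exists>w' k. k \<le> 1 \<and> isPQ (set w) k w' \<and> E w w'"
proof -
  define U where "U = set w"
  have fU: "finite U" and cU: "card U = Suc (Suc c)" unfolding U_def using distinct_card[OF assms(1)] assms(2) by auto
  define P where "P i j \<longleftrightarrow> (\<exists>v x w'. v \<in> U \<and> x \<in> U \<and> rk U v = i \<and> rk U x = j \<and> Mid U v x w' \<and> E w w')" for i j
  have Mid_in: "v \<in> U \<and> x \<in> U \<and> v \<noteq> x" if "Mid U v x w'" for v x w'
    using that unfolding Mid_def by auto
  have rkle: "rk U y \<le> c + 1" if "y \<in> U" for y using rk_less_card[OF fU that] cU by simp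
  obtain v0 x0 w0 where m0: "Mid U v0 x0 w0" "E w w0" using Mid_start[OF assms] unfolding U_def by blast
  have st: "P (rk U v0) (rk U x0)" unfolding P_def using m0 Mid_in by blast
  have st2: "rk U v0 \<le> c+1" "rk U x0 \<le> c+1" "rk U v0 \<noteq> rk U x0"
    using m0 Mid_in[OF m0(1)] rkle rk_inj[OF fU] by auto
  have H1: "P i' j" if p: "P i j" "i' \<le> c+1" "i' \<noteq> j"
      "(if j < i' then i' - 1 else i') mod 2 = (if j < i then i - 1 else i) mod 2" for i j i'
  proof -
    obtain v x w' where h: "v \<in> U" "x \<in> U" "rk U v = i" "rk U x = j" "Mid U v x w'" "E w w'"
      using p(1) unfolding P_def by blast
    obtain v' where v': "v' \<in> U" "rk U v' = i'" using rk_exists[OF fU, of i'] p(2) cU by auto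
    have "v' \<noteq> x" using v' h p(3) by auto
    have "v \<noteq> x" using Mid_in[OF h(5)] by simp
    have r1: "rk (U - {x}) v' = (if j < i' then i' - 1 else i')"
      using rk_remove[OF fU h(2) v'(1) \<open>v' \<noteq> x\<close>[symmetric]] rk_less_iff[OF fU h(2) v'(1)] h v' by simp
    have r2: "rk (U - {x}) v = (if j < i then i - 1 else i)"
      using rk_remove[OF fU h(2) h(1) \<open>v \<noteq> x\<close>[symmetric]] rk_less_iff[OF fU h(2) h(1)] h by simp
    obtain w'' where "Mid U v' x w''" "E w' w''"
      using Mid_v[OF h(5) cU v'(1) \<open>v' \<noteq> x\<close>] r1 r2 p(4) by auto
    then show ?thesis unfolding P_def using h v' E_trans by blast
  qed
  have H2: "P i j'" if p: "P i j" "j' \<le> c+1" "j' \<noteq> i"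
      "(if i < j' then j' - 1 else j') mod 2 = (if i < j then j - 1 else j) mod 2" for i j j'
  proof -
    obtain v x w' where h: "v \<in> U" "x \<in> U" "rk U v = i" "rk U x = j" "Mid U v x w'" "E w w'"
      using p(1) unfolding P_def by blast
    obtain x' where x': "x' \<in> U" "rk U x' = j'" using rk_exists[OF fU, of j'] p(2) cU by auto
    have "x' \<noteq> v" using x' h p(3) by auto
    have "v \<noteq> x" using Mid_in[OF h(5)] by simp
    have r1: "rk (U - {v}) x' = (if i < j' then j' - 1 else j')"
      using rk_remove[OF fU h(1) x'(1) \<open>x' \<noteq> v\<close>[symmetric]] rk_less_iff[OF fU h(1) x'(1)] h x' by simp
    have r2: "rk (U - {v}) x = (if i < j then j - 1 else j)"
      using rk_remove[OF fU h(1) h(2) \<open>v \<noteq> x\<close>] rk_less_iff[OF fU h(1) h(2)] h by simp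
    obtain w'' where "Mid U v x' w''" "E w' w''"
      using Mid_x[OF h(5) cU x'(1) \<open>x' \<noteq> v\<close>] r1 r2 p(4) by auto
    then show ?thesis unfolding P_def using h x' E_trans by blast
  qed
  have H3: "\<exists>h \<le> c+1. h \<noteq> i \<and> h \<noteq> j \<and> P h j" if p: "c = 2" "P i j" for i j
  proof -
    obtain v x w' where h: "v \<in> U" "x \<in> U" "rk U v = i" "rk U x = j" "Mid U v x w'" "E w w'"
      using p(2) unfolding P_def by blast
    obtain hh w'' where hh: "hh \<in> U" "hh \<noteq> v" "hh \<noteq> x" "Mid U hh x w''" "E w' w''"
      using Mid_c2[OF p(1) h(5)] by blast
    have "rk U hh \<noteq> i" "rk U hh \<noteq> j" using rk_inj[OF fU] hh h by metis+
    moreover have "P (rk U hh) j" unfolding P_def using hh h E_trans by blast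
    ultimately show ?thesis using rkle[OF hh(1)] by blast
  qed
  have "\<exists>t \<le> 1. P t (c+1)"
    apply (rule puzzle[of c P "rk U v0" "rk U x0"])
    using c1 apply simp
         apply (rule H1; assumption)
        apply (rule H2; assumption)
       apply (rule H3; assumption)
    using st st2 by simp_all
  then obtain t where t: "t \<le> 1" "P t (c+1)" by blast
  then obtain v x w' where h: "v \<in> U" "x \<in> U" "rk U v = t" "rk U x = Suc c" "Mid U v x w'" "E w w'"
    unfolding P_def by auto
  have "isPQ U t w'" using Mid_fin[OF h(5) cU h(4)] h(3) by simp
  then show ?thesis using t h unfolding U_def by blast
qed

end

context hs begin

lemma slideG:
  assumes "distinct w" "length w \<ge> Suc c" "nonav w"
  shows "\<exists>w1 z. E w (w1 @ [z]) \<and> nonav w1"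
proof -
  obtain a u b where w: "w = a @ u @ b" "std u \<in> sh" using assms(3) unfolding nonav_def by blast
  have lu: "length u = c" using hit_len w by simp
  show ?thesis
  proof (cases "b = []")
    case False
    then obtain b' z where bz: "b = b' @ [z]" by (metis rev_exhaust)
    have "nonav (a @ u @ b')" unfolding nonav_def using w by blast
    moreover have "w = (a @ u @ b') @ [z]" using w bz by simp
    ultimately show ?thesis using E_refl by metis
  next
    case True
    then have "a \<noteq> []" using assms(2) w lu by auto
    then obtain a' x where ax: "a = a' @ [x]" by (metis rev_exhaust)
    define T where "T = set (x # u)"
    have dxu: "distinct (x # u)" using assms(1) w ax by simp
    have fT: "finite T" and cT: "card T = Suc c" unfolding T_def using distinct_card[OF dxu] lu by auto
    have nl: "NL T x (x # u)" unfolding NL_def T_def using dxu w by auto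
    have xT: "x \<in> T" unfolding T_def by simp
    obtain z where z: "z \<in> T" "adj T x z" using adj_ex[OF fT cT xT] by blast
    obtain w1 where w1: "NR T z w1" "E (x # u) w1" using NL_NR_adj[OF fT cT nl z] by blast
    obtain u1 where u1: "w1 = u1 @ [z]" "std u1 \<in> sh" using w1 unfolding NR_def by blast
    have "E w (a' @ (u1 @ [z]) @ [])" using E_ctx[OF w1(2), of a' "[]"] w ax True u1 by simp
    moreover have "nonav (a' @ u1)" unfolding nonav_def using u1 by (metis append_Nil2)
    ultimately show ?thesis by (metis append.assoc append_Nil2)
  qed
qed

lemma rk_card_le:
  assumes "finite S" "A \<subseteq> S" "\<forall>a\<in>A. a < x"
  shows "card A \<le> rk S x"
  unfolding rk_def using assms by (intro card_mono) auto

lemma isPQ_D: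
  assumes "isPQ T k K"
  obtains x u r where "K = x # u @ r" "std u \<in> sh" "rk T x = k" "sorted_wrt (<) r"
    "\<forall>y\<in>set u. \<forall>z\<in>set r. y < z" "distinct K" "set K = T"
  using assms unfolding isPQ_def by blast

theorem main:
  "N \<ge> Suc c \<Longrightarrow> distinct w \<Longrightarrow> length w = N \<Longrightarrow> nonav w \<Longrightarrow>
     \<exists>w' k. k \<le> 1 \<and> isPQ (set w) k w' \<and> E w w'"
proof (induction N arbitrary: w rule: less_induct)
  case (less N)
  consider "N = Suc c" | "N = Suc (Suc c)" | "N \<ge> Suc (Suc (Suc c))" using less.prems(1) by linarith
  then show ?case
  proof cases
    case 1 then show ?thesis using base1 less.prems by simp
  next
    case 2 then show ?thesis using base2 less.prems by simp
  next
    case 3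
    have IH: "\<exists>w' k. k \<le> 1 \<and> isPQ (set v) k w' \<and> E v w'"
      if "distinct v" "length v = N - 1" "nonav v" for v
      using less.IH[of "N - 1" v] that 3 by simp
    obtain w1 z where s1: "E w (w1 @ [z])" "nonav w1" using slideG[of w] less.prems by blast
    have d1: "distinct (w1 @ [z])" "length (w1 @ [z]) = N" "set (w1 @ [z]) = set w"
      using E_inv[OF s1(1)] less.prems by auto
    obtain K k where K: "k \<le> 1" "isPQ (set w1) k K" "E w1 K" using IH[of w1] d1 s1 by auto
    obtain l u r where Kf: "K = l # u @ r" "std u \<in> sh" "rk (set w1) l = k" "distinct K" "set K = set w1"
      using isPQ_D[OF K(2)] by metis
    have e2: "E w (l # (u @ r @ [z]))" using E_trans[OF s1(1) E_ctx2[OF K(3), of "[z]"]] Kf by simp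
    have inv2: "distinct (l # (u @ r @ [z]))" "length (l # (u @ r @ [z])) = N" "set (l # (u @ r @ [z])) = set w"
      using E_inv[OF e2] less.prems by auto
    have ns: "nonav (u @ r @ [z])" unfolding nonav_def using Kf by (metis append_Nil)
    obtain K2 k2 where K2: "k2 \<le> 1" "isPQ (set (u @ r @ [z])) k2 K2" "E (u @ r @ [z]) K2"
      using IH[of "u @ r @ [z]"] inv2 ns by auto
    obtain l2 u2 r2 where K2f: "K2 = l2 # u2 @ r2" "std u2 \<in> sh" "rk (set (u @ r @ [z])) l2 = k2"
      "sorted_wrt (<) r2" "\<forall>y\<in>set u2. \<forall>z\<in>set r2. y < z" "distinct K2" "set K2 = set (u @ r @ [z])"
      using isPQ_D[OF K2(2)] by metis
    have e3: "E w (l # K2)" using E_trans[OF e2 E_ctx1[OF K2(3)]] .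
    have inv3: "distinct (l # K2)" "length (l # K2) = N" "set (l # K2) = set w"
      using E_inv[OF e3] less.prems by auto
    have lu2: "length u2 = c" using hit_len K2f by simp
    have "length (l # K2) = 2 + c + length r2" using K2f(1) lu2 by simp
    then have "length r2 \<noteq> 0" using inv3(2) 3 by linarith
    then obtain r2' M where r2: "r2 = r2' @ [M]" by (metis length_0_conv rev_exhaust)
    have f1: "\<forall>y\<in>set r2'. y < M" using K2f(4) r2 by (simp add: sorted_wrt_append)
    have f2: "\<forall>y\<in>set u2. y < M" using K2f(5) r2 by simp
    have dK2: "distinct K2" using K2f by simp
    have cu2: "card (set u2) = c" using distinct_card[of u2] dK2 K2f lu2 by simp
    have f3: "l2 < M"
    proof (rule ccontr)
      assume "\<not> l2 < M"
      moreover have "l2 \<noteq> M" using dK2 K2f r2 by auto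
      ultimately have "M < l2" by simp
      then have "\<forall>y\<in>set u2. y < l2" using f2 by auto
      moreover have "set u2 \<subseteq> set (u @ r @ [z])" using K2f by auto
      ultimately have "card (set u2) \<le> k2" using rk_card_le[of "set (u @ r @ [z])" "set u2" l2] K2f by simp
      then show False using cu2 K2 c1 by simp
    qed
    have f4: "\<forall>y\<in>set K2. y \<le> M"
    proof
      fix y assume "y \<in> set K2"
      then have "y = l2 \<or> y \<in> set u2 \<or> y \<in> set r2' \<or> y = M" using K2f(1) r2 by auto
      then show "y \<le> M" using f1 f2 f3 by (auto intro: less_imp_le)
    qed
    have lu: "length u = c" using hit_len Kf by simp
    have cu: "card (set u) = c" using distinct_card[of u] Kf lu by simp
    have f5: "l < M"
    proof (rule ccontr)
      assume "\<not> l < M"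
      moreover have "l \<noteq> M" using inv3 K2f r2 by auto
      ultimately have "M < l" by simp
      have "set u \<subseteq> set K2" using K2f(7) by auto
      then have "\<forall>y\<in>set u. y < l" using f4 \<open>M < l\<close> by (meson le_less_trans subsetD)
      moreover have "set u \<subseteq> set w1" using Kf by auto
      ultimately have "card (set u) \<le> k" using rk_card_le[of "set w1" "set u" l] Kf by simp
      then show False using cu K c1 by simp
    qed
    have mx: "y < M" if "y \<in> set w" "y \<noteq> M" for y
    proof -
      have "y \<in> set (l # K2)" using that inv3 by simp
      then have "y = l \<or> y \<in> set K2" by simp
      then show ?thesis using f4 f5 that(2) by (auto simp: order.order_iff_strict)
    qed
    define pre where "pre = l # l2 # u2 @ r2'"
    have lk: "l # K2 = pre @ [M]" unfolding pre_def using K2f r2 by simp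
    have dpre: "distinct pre" "length pre = N - 1" "M \<notin> set pre" using inv3 lk by auto
    have spre: "set w = insert M (set pre)" using inv3 lk by auto
    have npre: "nonav pre" unfolding nonav_def pre_def using K2f
      by (metis append_Cons append_Nil)
    obtain K3 k3 where K3: "k3 \<le> 1" "isPQ (set pre) k3 K3" "E pre K3" using IH[of pre] dpre npre by auto
    obtain x3 u3 r3 where K3f: "K3 = x3 # u3 @ r3" "std u3 \<in> sh" "rk (set pre) x3 = k3"
      "sorted_wrt (<) r3" "\<forall>y\<in>set u3. \<forall>z\<in>set r3. y < z" "distinct K3" "set K3 = set pre"
      using isPQ_D[OF K3(2)] by metis
    have e4: "E w (K3 @ [M])" using E_trans[OF e3[unfolded lk] E_ctx2[OF K3(3), of "[M]"]] .
    have ltM: "y < M" if "y \<in> set pre" for y using mx spre dpre that by auto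
    have d4: "distinct (K3 @ [M])" using K3f(6,7) dpre(3) by simp
    have s4: "set (K3 @ [M]) = set w" using K3f(7) spre by simp
    have a1: "K3 @ [M] = x3 # u3 @ (r3 @ [M])" using K3f(1) by simp
    have "x3 \<in> set pre" using K3f(1,7) by auto
    then have "x3 < M" using ltM by blast
    then have "{y \<in> set w. y < x3} = {y \<in> set pre. y < x3}" using spre by auto
    then have a2: "rk (set w) x3 = k3" using K3f(3) unfolding rk_def by simp
    have r3M: "\<forall>y\<in>set r3. y < M" "\<forall>y\<in>set u3. y < M" using K3f(1,7) ltM by auto
    have a3: "sorted_wrt (<) (r3 @ [M])" using K3f(4) r3M by (simp add: sorted_wrt_append)
    have a4: "\<forall>y\<in>set u3. \<forall>z\<in>set (r3 @ [M]). y < z" using K3f(5) r3M by auto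
    have "isPQ (set w) k3 (K3 @ [M])"
      unfolding isPQ_def using d4 s4 a1 a2 a3 a4 K3f(2) by blast
    then show ?thesis using e4 K3 by blast
  qed
qed

end


lemma r_sub:
  fixes x :: nat
  assumes d1: "distinct (x # u1 @ r1)" and d2: "distinct (x # u2 @ r2)"
    and s: "set (x # u1 @ r1) = set (x # u2 @ r2)"
    and o1: "\<forall>y\<in>set u1. \<forall>z\<in>set r1. y < z" and o2: "\<forall>y\<in>set u2. \<forall>z\<in>set r2. y < z"
    and l: "length r1 = length r2"
  shows "set r2 \<subseteq> set r1"
proof
  fix y assume y: "y \<in> set r2"
  show "y \<in> set r1"
  proof (rule ccontr)
    assume ny: "y \<notin> set r1"
    have "y \<noteq> x" using d2 y by auto
    then have yu1: "y \<in> set u1" using s y ny by auto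
    have sub: "set r1 \<subseteq> set r2"
    proof
      fix z assume z: "z \<in> set r1"
      have yz: "y < z" using o1 yu1 z by blast
      have "z \<noteq> x" using d1 z by auto
      then have "z \<in> set u2 \<or> z \<in> set r2" using s z by auto
      moreover have "z \<notin> set u2" using o2 y yz by (meson less_asym)
      ultimately show "z \<in> set r2" by simp
    qed
    then have "set r1 \<subset> set r2" using y ny by blast
    then have "card (set r1) < card (set r2)" by (simp add: psubset_card_mono)
    moreover have "card (set r1) = length r1" "card (set r2) = length r2"
      using d1 d2 distinct_card by auto
    ultimately show False using l by simp
  qed
qed

context hs begin

lemma isPQ_uniq:
  assumes "isPQ T k w1" "isPQ T k w2"
  shows "E w1 w2"
proof -
  obtain x1 u1 r1 where A: "w1 = x1 # u1 @ r1" "std u1 \<in> sh" "rk T x1 = k" "sorted_wrt (<) r1"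
    "\<forall>y\<in>set u1. \<forall>z\<in>set r1. y < z" "distinct w1" "set w1 = T"
    using isPQ_D[OF assms(1)] by metis
  obtain x2 u2 r2 where B: "w2 = x2 # u2 @ r2" "std u2 \<in> sh" "rk T x2 = k" "sorted_wrt (<) r2"
    "\<forall>y\<in>set u2. \<forall>z\<in>set r2. y < z" "distinct w2" "set w2 = T"
    using isPQ_D[OF assms(2)] by metis
  have fT: "finite T" using A(7) by blast
  have "x1 \<in> T" "x2 \<in> T" using A(1,7) B(1,7) by auto
  then have "x1 = x2" using rk_inj[OF fT] A(3) B(3) by simp
  have "length w1 = length w2" using A(6,7) B(6,7) distinct_card by metis
  moreover have "length u1 = c" "length u2 = c" using A(2) B(2) hit_len by auto
  ultimately have lr: "length r1 = length r2" using A(1) B(1) by simp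
  have "set r2 \<subseteq> set r1" using r_sub[of x1 u1 r1 u2 r2] A B \<open>x1 = x2\<close> lr by simp
  moreover have "set r1 \<subseteq> set r2" using r_sub[of x1 u2 r2 u1 r1] A B \<open>x1 = x2\<close> lr by simp
  ultimately have "set r1 = set r2" by blast
  then have rr: "r1 = r2" using strict_sorted_equal A(4) B(4) by blast
  have "set u1 = T - {x1} - set r1" using A(1,6,7) by auto
  moreover have "set u2 = T - {x1} - set r1" using B(1,6,7) \<open>x1 = x2\<close> rr by auto
  ultimately have "E u1 u2" using hit_equiv A(2) B(2) by simp
  then show ?thesis using E_ctx[of u1 u2 "[x1]" r1] A(1) B(1) \<open>x1 = x2\<close> rr by simp
qed

lemma E_K:
  assumes "\<phi> \<in> perms n" "E \<phi> \<psi>"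
  shows "K_equiv m n \<phi> \<psi>"
  using assms(2) unfolding E_def
proof (induction rule: rtranclp_induct)
  case base
  then show ?case using assms(1) unfolding K_equiv_def by simp
next
  case (step y z)
  have yp: "y \<in> perms n" using step.IH unfolding K_equiv_def by simp
  obtain a b w k where h: "y = a @ w @ b" "z = a @ rotate k w @ b" "std w \<in> sh"
    using step.hyps(2) unfolding rstep_def by blast
  have zp: "z \<in> perms n" using yp rstep_inv[OF step.hyps(2)] unfolding perms_def by auto
  have "length w = length m" using hit_len h(3) len_m by simp
  moreover have "std (rotate k w) \<in> sh" using h(3) by (simp add: std_rotate sh_rot)
  ultimately have "K_step m n y z" unfolding K_step_def K_same_part_def using yp zp h
    by (intro conjI exI[of _ a] exI[of _ b] exI[of _ w] exI[of _ "rotate k w"]) auto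
  then show ?case using step.IH unfolding K_equiv_def
    by (metis (mono_tags, lifting) rtranclp.rtrancl_into_rtrancl zp)
qed

lemma setm: "set m = {1..c}" "distinct m" using mperm by (auto simp: perms_def)

lemma p_isPQ:
  assumes "n > c"
  shows "isPQ {1..n} 0 (p_perm m n)"
proof -
  define u where "u = map (\<lambda>x. x + 1) m"
  define r where "r = [c + 2..<n + 1]"
  have p: "p_perm m n = 1 # u @ r" unfolding p_perm_def u_def r_def using len_m by simp
  have su: "set u = {2..c+1}" unfolding u_def using setm by simp
  have sr: "set r = {c+2..n}" unfolding r_def by auto
  have du: "distinct u" unfolding u_def using setm by (simp add: distinct_map)
  have "distinct (1 # u @ r)" using su sr du unfolding r_def by auto
  moreover have "set (1 # u @ r) = {1..n}" using su sr assms by auto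
  moreover have "std u = m" unfolding u_def using std_map_mono[of m "\<lambda>x. x + 1"] std_perm[OF mperm] by simp
  moreover have "rk {1..n} 1 = 0" unfolding rk_def by simp
  moreover have "sorted_wrt (<) r" unfolding r_def by (rule sorted_wrt_upt)
  moreover have "\<forall>y\<in>set u. \<forall>z\<in>set r. y < z" using su sr by auto
  ultimately show ?thesis unfolding isPQ_def p using m_sh by blast
qed

lemma swap12_inv: "swap12 (swap12 x) = x" unfolding swap12_def by auto

lemma q_isPQ:
  assumes "n > c"
  shows "isPQ {1..n} 1 (q_perm m n)"
proof -
  define g where "g x = swap12 (x + 1)" for x
  define u where "u = map g m"
  define r where "r = [c + 2..<n + 1]"
  have p: "p_perm m n = 1 # map (\<lambda>x. x + 1) m @ r" unfolding p_perm_def r_def using len_m by simp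
  have mr: "map swap12 r = r"
  proof (rule map_idI)
    fix x assume "x \<in> set r"
    then have "x \<ge> 3" unfolding r_def using c1 by auto
    then show "swap12 x = x" unfolding swap12_def by auto
  qed
  have q: "q_perm m n = 2 # u @ r" unfolding q_perm_def p u_def g_def using mr by (simp add: swap12_def)
  have dp: "distinct (p_perm m n)" and sp: "set (p_perm m n) = {1..n}"
    using p_isPQ[OF assms] unfolding isPQ_def by auto
  have "distinct (q_perm m n)" unfolding q_perm_def using dp
    by (simp add: distinct_map inj_on_def) (metis swap12_inv)
  moreover have "set (q_perm m n) = {1..n}"
  proof -
    have "swap12 ` {1..n} = {1..n}"
    proof
      show "swap12 ` {1..n} \<subseteq> {1..n}" using assms c1 unfolding swap12_def by auto
      show "{1..n} \<subseteq> swap12 ` {1..n}"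
      proof
        fix x assume x: "x \<in> {1..n}"
        have "swap12 x \<in> {1..n}" using x assms c1 unfolding swap12_def by auto
        then show "x \<in> swap12 ` {1..n}" using swap12_inv by (metis image_eqI)
      qed
    qed
    then show ?thesis unfolding q_perm_def using sp by simp
  qed
  moreover have mono: "\<forall>a\<in>set m. \<forall>b\<in>set m. a < b \<longrightarrow> g a < g b"
    using setm unfolding g_def swap12_def by auto
  then have "std u = m" unfolding u_def using std_map_mono[OF mono] std_perm[OF mperm] by simp
  moreover have "rk {1..n} 2 = 1"
  proof -
    have "{y \<in> {1..n}. y < 2} = {1}" using assms c1 by auto
    then show ?thesis unfolding rk_def by simp
  qed
  moreover have "sorted_wrt (<) r" unfolding r_def by (rule sorted_wrt_upt)
  moreover have "\<forall>y\<in>set u. \<forall>z\<in>set r. y < z"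
  proof -
    have "\<forall>y\<in>set u. y \<le> c + 1" using setm unfolding u_def g_def swap12_def by auto
    moreover have "\<forall>z\<in>set r. c + 2 \<le> z" unfolding r_def by auto
    ultimately show ?thesis by fastforce
  qed
  ultimately show ?thesis unfolding isPQ_def q using m_sh by blast
qed

theorem thm_loc:
  assumes "n > c" "\<phi> \<in> perms n" "non_avoider m \<phi>"
  shows "K_equiv m n \<phi> (p_perm m n) \<or> K_equiv m n \<phi> (q_perm m n)"
proof -
  have d: "distinct \<phi>" "set \<phi> = {1..n}" using assms(2) by (auto simp: perms_def)
  have l: "length \<phi> = n" using distinct_card[OF d(1)] d(2) by simp
  have na: "nonav \<phi>" using assms(3) unfolding non_avoider_def nonav_def by blast
  obtain w' k where w: "k \<le> 1" "isPQ {1..n} k w'" "E \<phi> w'"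
    using main[of n \<phi>] assms(1) d l na by auto
  show ?thesis
  proof (cases "k = 0")
    case True
    then have "E w' (p_perm m n)" using isPQ_uniq w(2) p_isPQ[OF assms(1)] by simp
    then show ?thesis using E_K[OF assms(2)] E_trans w(3) by blast
  next
    case False
    then have "k = 1" using w(1) by simp
    then have "E w' (q_perm m n)" using isPQ_uniq w(2) q_isPQ[OF assms(1)] by simp
    then show ?thesis using E_K[OF assms(2)] E_trans w(3) by blast
  qed
qed

end

theorem theorem2p7:
  fixes m :: "nat list" and c n :: nat
  assumes "c > 1" and "m \<in> perms c" and "n > c"
  shows "\<forall>\<phi> \<in> perms n. non_avoider m \<phi> \<longrightarrow>
           K_equiv m n \<phi> (p_perm m n) \<or> K_equiv m n \<phi> (q_perm m n)"
proof -
  interpret hs m c using assms(1,2) by unfold_locales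
  show ?thesis using thm_loc assms(3) by blast
qed


end
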